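(* The set $X^{\mathcal B}=\{x^{\mathbf b}:\mathbf b\in\mathcal B\}$ is a basis of the $\mathbb C(\lambda)$-vector space $S'\big/\sum_{i=1}^n\big(x_i\frac{\partial f_\lambda}{\partial x_i}\big)S'$.
   Context: Let $A=\{\mathbf a_1,\dots,\mathbf a_m\}\subseteq\mathbb Z^n$ be linearly independent over $\mathbb R$, $\mathbf a_0\in\mathbb Z^n$, and $\ell_0,\dots,\ell_m$ positive integers with gcd $1$, $\ell_0\mathbf a_0=\sum_{j=1}^m\ell_j\mathbf a_j$, $\ell_0=\sum_{j=1}^m\ell_j$. Let $f_\lambda=\sum_{j=1}^m\ell_jx^{\mathbf a_j}-\ell_0\lambda x^{\mathbf a_0}$. Let $V$ be the real span of $A$, $V_{\mathbb Z}=V\cap\mathbb Z^n$, $C(A)$ the real cone generated by $A$, $M=V_{\mathbb Z}\cap C(A)$. Let $S'$ be the $\mathbb C(\lambda)$-subalgebra of $\mathbb C(\lambda)[x_1^{\pm1},\dots,x_n^{\pm1}]$ spanned by $\{x^u:u\in M\}$. Let $P(A)=\{\sum_jc_j\mathbf a_j:0\le c_j<1\}$ and $\mathcal B=V_{\mathbb Z}\cap P(A)$. *)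

theory Defs
  imports "HOL-Analysis.Analysis" "HOL-Library.Poly_Mapping"
    "HOL-Computational_Algebra.Polynomial" "HOL-Computational_Algebra.Fraction_Field"
begin

type_synonym ratfun = "complex poly fract"

definition lam :: ratfun where "lam = Fract [:0, 1:] 1"

text \<open>Laurent polynomials in x_1..x_n over C(lambda): finitely supported functions
  from exponent vectors in Z^n to coefficients; multiplication is convolution.\<close>
type_synonym 'n laurent = "(int ^ 'n) \<Rightarrow>\<^sub>0 ratfun"

definition xmon :: "int ^ ('n::finite) \<Rightarrow> 'n laurent" where
  "xmon u = Poly_Mapping.single u 1"

text \<open>The operator x_i d/dx_i on Laurent polynomials: x^u maps to u_i x^u.\<close>
definition euler_op :: "'n::finite \<Rightarrow> 'n laurent \<Rightarrow> 'n laurent" where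
  "euler_op i p = Poly_Mapping.mapp (\<lambda>u c. of_int (u $ i) * c) p"

definition rv :: "int ^ ('n::finite) \<Rightarrow> real ^ 'n" where
  "rv u = (\<chi> i. real_of_int (u $ i))"

definition f_lambda :: "nat \<Rightarrow> (nat \<Rightarrow> int ^ ('n::finite)) \<Rightarrow> int ^ 'n \<Rightarrow> (nat \<Rightarrow> nat) \<Rightarrow> 'n laurent" where
  "f_lambda m a a0 l =
     (\<Sum>j\<in>{1..m}. Poly_Mapping.single (a j) (of_nat (l j)))
     - Poly_Mapping.single a0 (of_nat (l 0) * lam)"

definition VZ :: "nat \<Rightarrow> (nat \<Rightarrow> int ^ ('n::finite)) \<Rightarrow> (int ^ 'n) set" where
  "VZ m a = {u. rv u \<in> span (rv ` a ` {1..m})}"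

definition coneA :: "nat \<Rightarrow> (nat \<Rightarrow> int ^ ('n::finite)) \<Rightarrow> (real ^ 'n) set" where
  "coneA m a = {v. \<exists>c::nat \<Rightarrow> real. (\<forall>j\<in>{1..m}. 0 \<le> c j) \<and> v = (\<Sum>j\<in>{1..m}. c j *\<^sub>R rv (a j))}"

definition parA :: "nat \<Rightarrow> (nat \<Rightarrow> int ^ ('n::finite)) \<Rightarrow> (real ^ 'n) set" where
  "parA m a = {v. \<exists>c::nat \<Rightarrow> real. (\<forall>j\<in>{1..m}. 0 \<le> c j \<and> c j < 1) \<and> v = (\<Sum>j\<in>{1..m}. c j *\<^sub>R rv (a j))}"

definition Mset :: "nat \<Rightarrow> (nat \<Rightarrow> int ^ ('n::finite)) \<Rightarrow> (int ^ 'n) set" where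
  "Mset m a = {u \<in> VZ m a. rv u \<in> coneA m a}"

definition Bset :: "nat \<Rightarrow> (nat \<Rightarrow> int ^ ('n::finite)) \<Rightarrow> (int ^ 'n) set" where
  "Bset m a = {u \<in> VZ m a. rv u \<in> parA m a}"

definition Sprime :: "nat \<Rightarrow> (nat \<Rightarrow> int ^ ('n::finite)) \<Rightarrow> 'n laurent set" where
  "Sprime m a = {p. Poly_Mapping.keys p \<subseteq> Mset m a}"

definition Jideal :: "('n::finite) laurent \<Rightarrow> 'n laurent set \<Rightarrow> 'n laurent set" where
  "Jideal f S = {\<Sum>i\<in>UNIV. euler_op i f * g i | g. \<forall>i. g i \<in> S}"

end

theory Submission
  imports Defs
begin

lemma rv_add: "rv (u + w) = rv u + rv w"
  by (simp add: rv_def vec_eq_iff)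
lemma rv_diff: "rv (u - w) = rv u - rv w"
  by (simp add: rv_def vec_eq_iff)
lemma rv_zero: "rv 0 = 0"
  by (simp add: rv_def vec_eq_iff)
lemma rv_smult: "rv (k *s u) = of_int k *\<^sub>R rv u"
  by (simp add: rv_def vec_eq_iff)
lemma rv_sum: "rv (sum f S) = (\<Sum>x\<in>S. rv (f x))"
  by (induction S rule: infinite_finite_induct) (auto simp: rv_zero rv_add)
lemma rv_inj: "rv u = rv w \<Longrightarrow> u = w"
  by (simp add: rv_def vec_eq_iff)


definition ofr :: "real \<Rightarrow> ratfun" where "ofr r = Fract [:complex_of_real r:] 1"

lemma ofr_add: "ofr (x + y) = ofr x + ofr y"
  by (simp add: ofr_def add_fract)
lemma ofr_mult: "ofr (x * y) = ofr x * ofr y"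
  by (simp add: ofr_def mult_fract mult_to_poly mult.commute)
lemma ofr_zero: "ofr 0 = 0"
  by (simp add: ofr_def Zero_fract_def)
lemma ofr_one: "ofr 1 = 1"
  unfolding ofr_def of_real_1 one_pCons[symmetric] One_fract_def ..
lemma ofr_sum: "ofr (sum f S) = (\<Sum>x\<in>S. ofr (f x))"
  by (induction S rule: infinite_finite_induct) (simp_all add: ofr_zero ofr_add)
lemma ofr_of_nat: "ofr (of_nat n) = of_nat n"
  by (simp add: ofr_def of_nat_fract of_nat_poly)
lemma ofr_uminus: "ofr (- x) = - ofr x"
  by (simp add: ofr_def minus_fract)
lemma ofr_of_int: "ofr (of_int k) = of_int k"
proof (cases "k \<ge> 0")
  case True
  then obtain n where "k = int n" using nonneg_eq_int by blast
  then show ?thesis using ofr_of_nat[of n] by simp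
next
  case False
  then have "- k \<ge> 0" by simp
  then obtain n where "- k = int n" using nonneg_eq_int by blast
  then have "k = - int n" by simp
  then show ?thesis using ofr_of_nat[of n] ofr_uminus[of "real n"] by simp
qed

lemma lam_pow_ne1: "0 < n \<Longrightarrow> lam ^ n \<noteq> 1"
proof
  assume n: "0 < n" and h: "lam ^ n = 1"
  have "\<And>k. lam ^ k = Fract ([:0, 1:] ^ k) 1"
  proof -
    fix k show "lam ^ k = Fract ([:0, 1:] ^ k) 1"
      by (induction k) (simp_all add: lam_def mult_fract One_fract_def)
  qed
  then have "Fract ([:0, 1:] ^ n :: complex poly) 1 = 1" using h by simp
  then have "([:0, 1:] ^ n :: complex poly) = 1" unfolding One_fract_def by (simp add: eq_fract)
  then have "degree ([:0, 1:] ^ n :: complex poly) = 0" by simp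
  moreover have "degree ([:0, 1:] ^ n :: complex poly) = n" by (rule degree_linear_power)
  ultimately show False using n by simp
qed

lemma ratfun_of_nat_ne0: "0 < n \<Longrightarrow> (of_nat n :: ratfun) \<noteq> 0"
  by (simp add: of_nat_fract Zero_fract_def eq_fract of_nat_poly)

lemma lookup_euler: "Poly_Mapping.lookup (euler_op i p) u = of_int (u $ i) * Poly_Mapping.lookup p u"
  by (simp add: euler_op_def lookup_mapp when_def in_keys_iff)

lemma euler_add: "euler_op i (p + q) = euler_op i p + euler_op i q"
  by (rule poly_mapping_eqI) (simp add: lookup_euler lookup_add distrib_left)
lemma euler_diff: "euler_op i (p - q) = euler_op i p - euler_op i q"
  by (rule poly_mapping_eqI) (simp add: lookup_euler lookup_minus right_diff_distrib)
lemma euler_zero: "euler_op i 0 = 0"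
  by (rule poly_mapping_eqI) (simp add: lookup_euler)
lemma euler_sum: "euler_op i (sum f S) = (\<Sum>x\<in>S. euler_op i (f x))"
  by (induction S rule: infinite_finite_induct) (simp_all add: euler_zero euler_add)
lemma euler_single: "euler_op i (Poly_Mapping.single u c) = Poly_Mapping.single u (of_int (u $ i) * c)"
  by (rule poly_mapping_eqI) (simp add: lookup_euler lookup_single when_def)

lemma single_sum: "Poly_Mapping.single k (sum f S) = (\<Sum>x\<in>S. Poly_Mapping.single k (f x))"
  by (induction S rule: infinite_finite_induct) (simp_all add: single_add)

lemma poly_expand: "p = (\<Sum>v\<in>Poly_Mapping.keys p. Poly_Mapping.single v (Poly_Mapping.lookup p v))"
  by (rule poly_mapping_eqI) (simp add: lookup_sum lookup_single when_def in_keys_iff)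

lemma keys_uminus': "Poly_Mapping.keys (- p) = Poly_Mapping.keys p"
  by (auto simp: in_keys_iff)

locale P55 =
  fixes m :: nat and a :: "nat \<Rightarrow> int ^ 'n::finite" and a0 :: "int ^ 'n" and l :: "nat \<Rightarrow> nat"
  assumes inj: "inj_on a {1..m}"
    and indep: "independent (rv ` a ` {1..m})"
    and lpos: "\<forall>j\<in>{0..m}. 0 < l j"
    and rel: "of_nat (l 0) *s a0 = (\<Sum>j\<in>{1..m}. of_nat (l j) *s a j)"
    and l0: "l 0 = (\<Sum>j\<in>{1..m}. l j)"
begin

definition II :: "nat set" where "II = {1..m}"

lemma finite_II[simp]: "finite II" by (simp add: II_def)

lemma indep': "independent (rv ` a ` II)" using indep by (simp add: II_def)
lemma rel': "of_nat (l 0) *s a0 = (\<Sum>j\<in>II. of_nat (l j) *s a j)" using rel by (simp add: II_def)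
lemma frac_lt1: "(x::real) - of_int \<lfloor>x\<rfloor> < 1" using floor_correct[of x] by linarith

lemma inj_rva: "inj_on (rv \<circ> a) II"
proof (rule inj_onI)
  fix x y assume xy: "x \<in> II" "y \<in> II" "(rv \<circ> a) x = (rv \<circ> a) y"
  then have "a x = a y" using rv_inj by simp
  then show "x = y" using inj xy unfolding II_def by (meson inj_onD)
qed

lemma reindex: "(\<Sum>v\<in>rv ` a ` II. g v *\<^sub>R v) = (\<Sum>j\<in>II. g (rv (a j)) *\<^sub>R rv (a j))"
proof -
  have "rv ` a ` II = (rv \<circ> a) ` II" by auto
  then show ?thesis using sum.reindex[OF inj_rva, of "\<lambda>v. g v *\<^sub>R v"] by simp
qed

lemma VZ_iff: "u \<in> VZ m a \<longleftrightarrow> (\<exists>c. rv u = (\<Sum>j\<in>II. c j *\<^sub>R rv (a j)))"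
proof
  assume "u \<in> VZ m a"
  then have "rv u \<in> span (rv ` a ` II)" by (simp add: VZ_def II_def)
  then obtain g where "rv u = (\<Sum>v\<in>rv ` a ` II. g v *\<^sub>R v)"
    using real_vector.span_finite[of "rv ` a ` II"] by auto
  then have "rv u = (\<Sum>j\<in>II. g (rv (a j)) *\<^sub>R rv (a j))"
    by (simp only: reindex)
  then show "\<exists>c. rv u = (\<Sum>j\<in>II. c j *\<^sub>R rv (a j))"
    by (rule exI[of _ "\<lambda>j. g (rv (a j))"])
next
  assume "\<exists>c. rv u = (\<Sum>j\<in>II. c j *\<^sub>R rv (a j))"
  then obtain c where c: "rv u = (\<Sum>j\<in>II. c j *\<^sub>R rv (a j))" by blast
  have "(\<Sum>j\<in>II. c j *\<^sub>R rv (a j)) \<in> span (rv ` a ` II)"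
    by (intro real_vector.span_sum real_vector.span_scale real_vector.span_base) auto
  then show "u \<in> VZ m a" by (simp add: VZ_def c II_def)
qed

lemma uniq:
  assumes "(\<Sum>j\<in>II. c j *\<^sub>R rv (a j)) = (\<Sum>j\<in>II. d j *\<^sub>R rv (a j))" and j: "j \<in> II"
  shows "c j = d j"
proof -
  define e where "e v = (c - d) (the_inv_into II (rv \<circ> a) v)" for v
  have "(\<Sum>j\<in>II. (c j - d j) *\<^sub>R rv (a j)) = 0"
    using assms(1) by (simp add: scaleR_diff_left sum_subtractf)
  moreover have "\<And>j. j \<in> II \<Longrightarrow> e (rv (a j)) = c j - d j"
    unfolding e_def using the_inv_into_f_f[OF inj_rva] by (metis comp_apply minus_apply)
  moreover have "(\<Sum>v\<in>rv ` a ` II. e v *\<^sub>R v) = (\<Sum>j\<in>II. e (rv (a j)) *\<^sub>R rv (a j))"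
    by (rule reindex)
  moreover have "(\<Sum>j\<in>II. e (rv (a j)) *\<^sub>R rv (a j)) = (\<Sum>j\<in>II. (c j - d j) *\<^sub>R rv (a j))"
    by (rule sum.cong) (use \<open>\<And>j. j \<in> II \<Longrightarrow> e (rv (a j)) = c j - d j\<close> in auto)
  ultimately have "(\<Sum>v\<in>rv ` a ` II. e v *\<^sub>R v) = 0"
    by simp
  then have "e (rv (a j)) = 0"
    using real_vector.independentD[OF indep', of "rv ` a ` II" e] j by auto
  then show ?thesis using \<open>\<And>j. j \<in> II \<Longrightarrow> e (rv (a j)) = c j - d j\<close>[OF j] by simp
qed

definition coef :: "int ^ 'n \<Rightarrow> nat \<Rightarrow> real" where
  "coef u = (SOME c. rv u = (\<Sum>j\<in>II. c j *\<^sub>R rv (a j)))"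

lemma coef_rep: "u \<in> VZ m a \<Longrightarrow> rv u = (\<Sum>j\<in>II. coef u j *\<^sub>R rv (a j))"
proof -
  assume "u \<in> VZ m a"
  then have "\<exists>c. rv u = (\<Sum>j\<in>II. c j *\<^sub>R rv (a j))" using VZ_iff by blast
  then show ?thesis unfolding coef_def by (rule someI_ex)
qed

lemma coef_eq: "rv u = (\<Sum>j\<in>II. c j *\<^sub>R rv (a j)) \<Longrightarrow> j \<in> II \<Longrightarrow> coef u j = c j"
proof -
  assume h: "rv u = (\<Sum>j\<in>II. c j *\<^sub>R rv (a j))" and j: "j \<in> II"
  then have u: "u \<in> VZ m a" using VZ_iff by blast
  show ?thesis by (rule uniq[OF _ j]) (use coef_rep[OF u] h in simp)
qed

lemma rv_add_rep: "u \<in> VZ m a \<Longrightarrow> w \<in> VZ m a \<Longrightarrow>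
   rv (u + w) = (\<Sum>j\<in>II. (coef u j + coef w j) *\<^sub>R rv (a j))"
proof -
  assume u: "u \<in> VZ m a" and w: "w \<in> VZ m a"
  have "rv (u + w) = rv u + rv w" by (rule rv_add)
  also have "\<dots> = (\<Sum>j\<in>II. coef u j *\<^sub>R rv (a j)) + (\<Sum>j\<in>II. coef w j *\<^sub>R rv (a j))"
    by (simp only: coef_rep[OF u, symmetric] coef_rep[OF w, symmetric])
  also have "\<dots> = (\<Sum>j\<in>II. (coef u j + coef w j) *\<^sub>R rv (a j))"
    by (simp only: scaleR_add_left sum.distrib)
  finally show ?thesis .
qed

lemma VZ_add: "u \<in> VZ m a \<Longrightarrow> w \<in> VZ m a \<Longrightarrow> u + w \<in> VZ m a"
  unfolding VZ_iff[of "u+w"] by (rule exI, rule rv_add_rep)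

lemma coef_add: "u \<in> VZ m a \<Longrightarrow> w \<in> VZ m a \<Longrightarrow> j \<in> II \<Longrightarrow> coef (u + w) j = coef u j + coef w j"
  by (drule coef_eq[OF rv_add_rep]) simp_all

lemma rv_diff_rep: "u \<in> VZ m a \<Longrightarrow> w \<in> VZ m a \<Longrightarrow>
   rv (u - w) = (\<Sum>j\<in>II. (coef u j - coef w j) *\<^sub>R rv (a j))"
proof -
  assume u: "u \<in> VZ m a" and w: "w \<in> VZ m a"
  have "rv (u - w) = rv u - rv w" by (rule rv_diff)
  also have "\<dots> = (\<Sum>j\<in>II. coef u j *\<^sub>R rv (a j)) - (\<Sum>j\<in>II. coef w j *\<^sub>R rv (a j))"
    by (simp only: coef_rep[OF u, symmetric] coef_rep[OF w, symmetric])
  also have "\<dots> = (\<Sum>j\<in>II. (coef u j - coef w j) *\<^sub>R rv (a j))"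
    by (simp only: scaleR_diff_left sum_subtractf)
  finally show ?thesis .
qed

lemma VZ_diff: "u \<in> VZ m a \<Longrightarrow> w \<in> VZ m a \<Longrightarrow> u - w \<in> VZ m a"
  unfolding VZ_iff[of "u-w"] by (rule exI, rule rv_diff_rep)

lemma coef_diff: "u \<in> VZ m a \<Longrightarrow> w \<in> VZ m a \<Longrightarrow> j \<in> II \<Longrightarrow> coef (u - w) j = coef u j - coef w j"
  by (drule coef_eq[OF rv_diff_rep]) simp_all

lemma rv_comb: "rv (\<Sum>j\<in>II. k j *s a j) = (\<Sum>j\<in>II. of_int (k j) *\<^sub>R rv (a j))"
  by (simp add: rv_sum rv_smult)

lemma VZ_comb: "(\<Sum>j\<in>II. k j *s a j) \<in> VZ m a"
  unfolding VZ_iff by (rule exI, rule rv_comb)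

lemma coef_comb: "i \<in> II \<Longrightarrow> coef (\<Sum>j\<in>II. k j *s a j) i = of_int (k i)"
  using coef_eq[OF rv_comb] by simp

lemma sum_delta_vec: "i \<in> II \<Longrightarrow> (\<Sum>j\<in>II. (if j = i then 1 else 0) *s a j) = a i"
proof -
  assume i: "i \<in> II"
  have "(\<Sum>j\<in>II. (if j = i then 1 else 0) *s a j) = (\<Sum>j\<in>II. (if j = i then a j else 0))"
    by (rule sum.cong) auto
  then show ?thesis using i by simp
qed

lemma VZ_a: assumes i: "i \<in> II" shows "a i \<in> VZ m a"
proof -
  have "(\<Sum>j\<in>II. (if j = i then 1 else 0) *s a j) \<in> VZ m a" by (rule VZ_comb)
  then show ?thesis by (simp only: sum_delta_vec[OF i])
qed

lemma coef_a: assumes i: "i \<in> II" and j: "j \<in> II" shows "coef (a i) j = (if j = i then 1 else 0)"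
proof -
  have "coef (\<Sum>j\<in>II. (if j = i then 1 else 0) *s a j) j = of_int (if j = i then 1 else 0)"
    by (rule coef_comb[OF j])
  then show ?thesis by (simp only: sum_delta_vec[OF i]) simp
qed

lemma l0pos: "0 < l 0" using lpos by auto

definition alpha :: "nat \<Rightarrow> real" where "alpha j = real (l j) / real (l 0)"

lemma rv_a0: "rv a0 = (\<Sum>j\<in>II. alpha j *\<^sub>R rv (a j))"
proof -
  have h: "real (l 0) *\<^sub>R rv a0 = (\<Sum>j\<in>II. real (l j) *\<^sub>R rv (a j))"
    using arg_cong[OF rel', of rv] by (simp add: rv_smult rv_sum)
  have "rv a0 = (1 / real (l 0)) *\<^sub>R (real (l 0) *\<^sub>R rv a0)" using l0pos by simp
  also have "\<dots> = (1 / real (l 0)) *\<^sub>R (\<Sum>j\<in>II. real (l j) *\<^sub>R rv (a j))" by (simp only: h)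
  also have "\<dots> = (\<Sum>j\<in>II. alpha j *\<^sub>R rv (a j))"
    by (simp add: scaleR_sum_right alpha_def)
  finally show ?thesis .
qed

lemma VZ_a0: "a0 \<in> VZ m a"
  unfolding VZ_iff by (rule exI, rule rv_a0)

lemma coef_a0: "j \<in> II \<Longrightarrow> coef a0 j = alpha j"
  using coef_eq[OF rv_a0] by simp

lemma sum_alpha: "(\<Sum>j\<in>II. alpha j) = 1"
proof -
  have "(\<Sum>j\<in>II. alpha j) = (\<Sum>j\<in>II. real (l j)) / real (l 0)"
    by (simp add: alpha_def sum_divide_distrib)
  also have "(\<Sum>j\<in>II. real (l j)) = real (\<Sum>j\<in>II. l j)" by (rule of_nat_sum[symmetric])
  also have "(\<Sum>j\<in>II. l j) = l 0" unfolding II_def by (rule l0[symmetric])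
  finally show ?thesis using l0pos by simp
qed

lemma alpha_nonneg: "0 \<le> alpha j" by (simp add: alpha_def)


lemma M_iff: "u \<in> Mset m a \<longleftrightarrow> u \<in> VZ m a \<and> (\<forall>j\<in>II. 0 \<le> coef u j)"
proof
  assume "u \<in> Mset m a"
  then obtain c where u: "u \<in> VZ m a" and c: "\<forall>j\<in>II. 0 \<le> c j" "rv u = (\<Sum>j\<in>II. c j *\<^sub>R rv (a j))"
    unfolding Mset_def coneA_def II_def[symmetric] by blast
  have "\<forall>j\<in>II. coef u j = c j" using coef_eq[OF c(2)] by blast
  then show "u \<in> VZ m a \<and> (\<forall>j\<in>II. 0 \<le> coef u j)" using u c(1) by simp
next
  assume h: "u \<in> VZ m a \<and> (\<forall>j\<in>II. 0 \<le> coef u j)"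
  then have "rv u \<in> coneA m a" unfolding coneA_def II_def[symmetric]
    using coef_rep[of u] by (intro CollectI exI[of _ "coef u"]) simp
  then show "u \<in> Mset m a" using h unfolding Mset_def by simp
qed

lemma B_iff: "u \<in> Bset m a \<longleftrightarrow> u \<in> VZ m a \<and> (\<forall>j\<in>II. 0 \<le> coef u j \<and> coef u j < 1)"
proof
  assume "u \<in> Bset m a"
  then obtain c where u: "u \<in> VZ m a" and c: "\<forall>j\<in>II. 0 \<le> c j \<and> c j < 1" "rv u = (\<Sum>j\<in>II. c j *\<^sub>R rv (a j))"
    unfolding Bset_def parA_def II_def[symmetric] by blast
  have "\<forall>j\<in>II. coef u j = c j" using coef_eq[OF c(2)] by blast
  then show "u \<in> VZ m a \<and> (\<forall>j\<in>II. 0 \<le> coef u j \<and> coef u j < 1)" using u c(1) by simp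
next
  assume h: "u \<in> VZ m a \<and> (\<forall>j\<in>II. 0 \<le> coef u j \<and> coef u j < 1)"
  then have "rv u \<in> parA m a" unfolding parA_def II_def[symmetric]
    using coef_rep[of u] by (intro CollectI exI[of _ "coef u"]) simp
  then show "u \<in> Bset m a" using h unfolding Bset_def by simp
qed

lemma B_M: "b \<in> Bset m a \<Longrightarrow> b \<in> Mset m a"
  by (simp add: B_iff M_iff)

lemma M_add: "u \<in> Mset m a \<Longrightarrow> w \<in> Mset m a \<Longrightarrow> u + w \<in> Mset m a"
  by (simp add: M_iff VZ_add coef_add)

lemma M_a: "i \<in> II \<Longrightarrow> a i \<in> Mset m a"
  by (simp add: M_iff VZ_a coef_a)

lemma M_a0: "a0 \<in> Mset m a"
  by (simp add: M_iff VZ_a0 coef_a0 alpha_nonneg)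

lemma coef_zero: "j \<in> II \<Longrightarrow> coef 0 j = 0"
  using coef_eq[of 0 "\<lambda>_. 0" j] by (simp add: rv_zero)

lemma M_zero: "0 \<in> Mset m a"
proof -
  have "(\<Sum>j\<in>II. (\<lambda>_. 0) j *s a j) \<in> VZ m a" by (rule VZ_comb)
  then have "(0::int^'n) \<in> VZ m a" by simp
  then show ?thesis by (simp add: M_iff coef_zero)
qed

lemma M_smult: "u \<in> Mset m a \<Longrightarrow> of_nat s *s u \<in> Mset m a"
proof (induction s)
  case 0 then show ?case using M_zero by simp
next
  case (Suc s)
  have "of_nat (Suc s) *s u = of_nat s *s u + u" by (simp add: vector_sadd_rdistrib)
  then show ?case using Suc M_add by simp
qed

lemma M_sum_list: "set js \<subseteq> II \<Longrightarrow> sum_list (map a js) \<in> Mset m a"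
  by (induction js) (auto simp: M_zero M_add M_a)

definition fl :: "int ^ 'n \<Rightarrow> nat \<Rightarrow> int" where "fl u j = \<lfloor>coef u j\<rfloor>"
definition bs :: "int ^ 'n \<Rightarrow> int ^ 'n" where "bs u = u - (\<Sum>j\<in>II. fl u j *s a j)"
definition sn :: "int ^ 'n \<Rightarrow> nat" where "sn u = (\<Sum>j\<in>II. nat (fl u j))"

lemma bs_VZ: "u \<in> VZ m a \<Longrightarrow> bs u \<in> VZ m a"
  unfolding bs_def by (intro VZ_diff VZ_comb)

lemma coef_bs: "u \<in> VZ m a \<Longrightarrow> j \<in> II \<Longrightarrow> coef (bs u) j = coef u j - of_int (fl u j)"
  unfolding bs_def by (simp add: coef_diff VZ_comb coef_comb)

lemma bs_B: "u \<in> VZ m a \<Longrightarrow> bs u \<in> Bset m a"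
  using frac_lt1 by (auto simp: B_iff bs_VZ coef_bs fl_def)

lemma decomp: "u = bs u + (\<Sum>j\<in>II. fl u j *s a j)"
  by (simp add: bs_def)

lemma fl_shift: "u \<in> VZ m a \<Longrightarrow> j \<in> II \<Longrightarrow> fl (u + (\<Sum>j\<in>II. k j *s a j)) j = fl u j + k j"
  by (simp add: fl_def coef_add VZ_comb coef_comb)

lemma bs_shift: "u \<in> VZ m a \<Longrightarrow> bs (u + (\<Sum>j\<in>II. k j *s a j)) = bs u"
proof -
  assume u: "u \<in> VZ m a"
  have "(\<Sum>j\<in>II. fl (u + (\<Sum>j\<in>II. k j *s a j)) j *s a j) = (\<Sum>j\<in>II. (fl u j + k j) *s a j)"
    by (rule sum.cong) (simp_all add: fl_shift u vector_sadd_rdistrib)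
  also have "\<dots> = (\<Sum>j\<in>II. fl u j *s a j) + (\<Sum>j\<in>II. k j *s a j)"
    by (simp add: vector_sadd_rdistrib sum.distrib)
  finally show ?thesis unfolding bs_def by simp
qed

lemma B_fl: "b \<in> Bset m a \<Longrightarrow> j \<in> II \<Longrightarrow> fl b j = 0"
  by (simp add: B_iff fl_def floor_eq_iff)

lemma B_bs: "b \<in> Bset m a \<Longrightarrow> bs b = b"
  by (simp add: bs_def B_fl)

lemma B_sn: "b \<in> Bset m a \<Longrightarrow> sn b = 0"
  by (simp add: sn_def B_fl)

lemma M_fl: "u \<in> Mset m a \<Longrightarrow> j \<in> II \<Longrightarrow> 0 \<le> fl u j"
  by (simp add: M_iff fl_def)

lemma add_a_decomp: "i \<in> II \<Longrightarrow> v + a i = v + (\<Sum>j\<in>II. (if j = i then 1 else 0) *s a j)"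
  by (simp add: sum_delta_vec)

lemma bs_add_a: "v \<in> VZ m a \<Longrightarrow> i \<in> II \<Longrightarrow> bs (v + a i) = bs v"
  by (simp only: add_a_decomp bs_shift)

lemma sn_add_a: assumes v: "v \<in> Mset m a" and i: "i \<in> II" shows "sn (v + a i) = sn v + 1"
proof -
  have vz: "v \<in> VZ m a" using v M_iff by blast
  have "sn (v + a i) = (\<Sum>j\<in>II. nat (fl v j) + (if j = i then 1 else 0))"
    unfolding sn_def add_a_decomp[OF i]
    by (rule sum.cong) (simp_all add: fl_shift vz M_fl[OF v] nat_add_distrib)
  also have "\<dots> = sn v + 1" using i by (simp add: sum.distrib sn_def)
  finally show ?thesis .
qed

lemma add_a0_decomp: "v + a0 = (bs v + a0) + (\<Sum>j\<in>II. fl v j *s a j)"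
  by (simp add: bs_def)

lemma bs_add_a0: "v \<in> VZ m a \<Longrightarrow> bs (v + a0) = bs (bs v + a0)"
  by (subst add_a0_decomp) (simp add: bs_shift VZ_add bs_VZ VZ_a0)

lemma sn_add_a0: assumes v: "v \<in> Mset m a" shows "sn (v + a0) = sn v + sn (bs v + a0)"
proof -
  have vz: "v \<in> VZ m a" using v M_iff by blast
  have w: "bs v + a0 \<in> Mset m a" using M_add[OF B_M[OF bs_B[OF vz]] M_a0] .
  have wz: "bs v + a0 \<in> VZ m a" using w M_iff by blast
  have "sn (v + a0) = (\<Sum>j\<in>II. nat (fl v j) + nat (fl (bs v + a0) j))"
    unfolding sn_def
    by (subst add_a0_decomp, rule sum.cong) (simp_all add: fl_shift wz M_fl[OF v] M_fl[OF w] nat_add_distrib)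
  also have "\<dots> = sn v + sn (bs v + a0)" by (simp add: sum.distrib sn_def)
  finally show ?thesis .
qed

definition hh :: "int ^ 'n \<Rightarrow> real" where "hh u = (\<Sum>j\<in>II. coef u j)"

lemma hh_decomp: assumes u: "u \<in> Mset m a" shows "hh u = real (sn u) + hh (bs u)"
proof -
  have uz: "u \<in> VZ m a" using u M_iff by blast
  have "real (sn u) = (\<Sum>j\<in>II. real_of_int (fl u j))"
    unfolding sn_def of_nat_sum by (rule sum.cong) (simp_all add: M_fl[OF u])
  then show ?thesis unfolding hh_def by (simp add: coef_bs uz sum_subtractf)
qed

lemma hh_add_a0: "u \<in> VZ m a \<Longrightarrow> hh (u + a0) = hh u + 1"
  unfolding hh_def by (simp add: coef_add VZ_a0 coef_a0 sum.distrib sum_alpha)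

lemma hh_B: "b \<in> Bset m a \<Longrightarrow> 0 \<le> hh b"
  unfolding hh_def by (rule sum_nonneg) (simp add: B_iff)


lemma B_VZ: "b \<in> Bset m a \<Longrightarrow> b \<in> VZ m a"
  by (simp add: B_iff)

lemma M_VZ: "b \<in> Mset m a \<Longrightarrow> b \<in> VZ m a"
  by (simp add: M_iff)

definition step :: "nat \<times> (int ^ 'n) \<Rightarrow> nat \<times> (int ^ 'n)" where
  "step st = (if fst st = 0 then st else (fst st - 1 + sn (snd st + a0), bs (snd st + a0)))"

definition wt :: "nat \<times> (int ^ 'n) \<Rightarrow> nat" where
  "wt st = (if fst st = 0 then 0 else sn (snd st + a0))"

definition Xv :: "nat \<times> (int ^ 'n) \<Rightarrow> int ^ 'n" where
  "Xv st = snd st + of_nat (fst st) *s a0"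

definition Wt :: "nat \<times> (int ^ 'n) \<Rightarrow> nat \<Rightarrow> nat" where
  "Wt st n = (\<Sum>t<n. wt ((step ^^ t) st))"

lemma step_B: "snd st \<in> Bset m a \<Longrightarrow> snd (step st) \<in> Bset m a"
  unfolding step_def by (auto intro: bs_B VZ_add B_VZ VZ_a0)

lemma iter_B: "snd st \<in> Bset m a \<Longrightarrow> snd ((step ^^ n) st) \<in> Bset m a"
  by (induction n) (auto simp: step_B)

lemma step_inv: assumes b: "snd st \<in> Bset m a"
  shows "real (fst (step st)) + hh (snd (step st)) = real (fst st) + hh (snd st)"
proof (cases "fst st = 0")
  case True then show ?thesis by (simp add: step_def)
next
  case False
  have M: "snd st + a0 \<in> Mset m a" using M_add[OF B_M[OF b] M_a0] .
  have "hh (snd st + a0) = real (sn (snd st + a0)) + hh (bs (snd st + a0))" using hh_decomp[OF M] .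
  moreover have "hh (snd st + a0) = hh (snd st) + 1" using hh_add_a0[OF B_VZ[OF b]] .
  ultimately show ?thesis using False by (simp add: step_def of_nat_diff)
qed

lemma iter_inv: "snd st \<in> Bset m a \<Longrightarrow>
  real (fst ((step ^^ n) st)) + hh (snd ((step ^^ n) st)) = real (fst st) + hh (snd st)"
proof (induction n)
  case 0 then show ?case by simp
next
  case (Suc n)
  then show ?case using step_inv[OF iter_B[OF Suc.prems, of n]] by simp
qed

lemma iter_bound: "snd st \<in> Bset m a \<Longrightarrow> real (fst ((step ^^ n) st)) \<le> real (fst st) + hh (snd st)"
  using iter_inv[of st n] hh_B[OF iter_B[of st n]] by linarith

lemma Wt_Suc: "Wt st (Suc n) = Wt st n + wt ((step ^^ n) st)"
  by (simp add: Wt_def)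

lemma Wt_shift: "Wt st (Suc n) = wt st + Wt (step st) n"
  unfolding Wt_def sum.lessThan_Suc_shift by (simp del: funpow.simps add: funpow_Suc_right)


definition JJ where "JJ = Jideal (f_lambda m a a0 l) (Sprime m a)"
definition kap :: "'n \<Rightarrow> nat \<Rightarrow> ratfun" where "kap i k = of_nat (l k) * of_int (a k $ i)"

lemma f_expand: "f_lambda m a a0 l = (\<Sum>j\<in>II. Poly_Mapping.single (a j) (of_nat (l j))) - Poly_Mapping.single a0 (of_nat (l 0) * lam)"
  by (simp add: f_lambda_def II_def)

lemma rel_comp: "of_int (a0 $ i) * (of_nat (l 0) :: ratfun) = (\<Sum>k\<in>II. kap i k)"
proof -
  have "(of_nat (l 0) *s a0) $ i = (\<Sum>j\<in>II. of_nat (l j) *s a j) $ i" using rel' by simp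
  then have "int (l 0) * a0 $ i = (\<Sum>j\<in>II. int (l j) * a j $ i)" by (simp add: sum_component)
  then have "(of_int (int (l 0) * a0 $ i) :: ratfun) = of_int (\<Sum>j\<in>II. int (l j) * a j $ i)" by simp
  then show ?thesis by (simp add: kap_def mult.commute)
qed

lemma euler_f: "euler_op i (f_lambda m a a0 l) =
  (\<Sum>k\<in>II. Poly_Mapping.single (a k) (kap i k) - Poly_Mapping.single a0 (lam * kap i k))"
proof -
  have "euler_op i (f_lambda m a a0 l) = (\<Sum>k\<in>II. Poly_Mapping.single (a k) (kap i k))
     - Poly_Mapping.single a0 (of_int (a0 $ i) * (of_nat (l 0) * lam))"
    by (simp add: f_expand euler_diff euler_sum euler_single kap_def mult_ac)
  also have "Poly_Mapping.single a0 (of_int (a0 $ i) * (of_nat (l 0) * lam)) = Poly_Mapping.single a0 (lam * (\<Sum>k\<in>II. kap i k))"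
    by (simp add: rel_comp[symmetric] mult_ac)
  also have "\<dots> = (\<Sum>k\<in>II. Poly_Mapping.single a0 (lam * kap i k))"
    by (simp add: single_sum sum_distrib_left)
  finally show ?thesis by (simp add: sum_subtractf)
qed

lemma J_intro: "(\<forall>i. g i \<in> Sprime m a) \<Longrightarrow> (\<Sum>i\<in>UNIV. euler_op i (f_lambda m a a0 l) * g i) \<in> JJ"
  unfolding JJ_def Jideal_def by (rule CollectI, rule exI[of _ g], simp)

lemma J_zero: "0 \<in> JJ"
  unfolding JJ_def Jideal_def Sprime_def by (rule CollectI, rule exI[of _ "\<lambda>_. 0"]) simp

lemma J_add: assumes p: "p \<in> JJ" and q: "q \<in> JJ" shows "p + q \<in> JJ"
proof -
  obtain g1 where g1: "p = (\<Sum>i\<in>UNIV. euler_op i (f_lambda m a a0 l) * g1 i)" "\<forall>i. g1 i \<in> Sprime m a"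
    using p unfolding JJ_def Jideal_def by blast
  obtain g2 where g2: "q = (\<Sum>i\<in>UNIV. euler_op i (f_lambda m a a0 l) * g2 i)" "\<forall>i. g2 i \<in> Sprime m a"
    using q unfolding JJ_def Jideal_def by blast
  have "\<forall>i. g1 i + g2 i \<in> Sprime m a"
  proof
    fix i
    have "Poly_Mapping.keys (g1 i + g2 i) \<subseteq> Poly_Mapping.keys (g1 i) \<union> Poly_Mapping.keys (g2 i)" by (rule keys_add)
    moreover have "Poly_Mapping.keys (g1 i) \<subseteq> Mset m a" "Poly_Mapping.keys (g2 i) \<subseteq> Mset m a"
      using g1(2) g2(2) unfolding Sprime_def by auto
    ultimately show "g1 i + g2 i \<in> Sprime m a" unfolding Sprime_def by (simp only: mem_Collect_eq) blast
  qed
  moreover have "p + q = (\<Sum>i\<in>UNIV. euler_op i (f_lambda m a a0 l) * (g1 i + g2 i))"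
    by (simp add: g1(1) g2(1) distrib_left sum.distrib)
  ultimately show ?thesis using J_intro[of "\<lambda>i. g1 i + g2 i"] by simp
qed

lemma J_neg: assumes p: "p \<in> JJ" shows "- p \<in> JJ"
proof -
  obtain g1 where g1: "p = (\<Sum>i\<in>UNIV. euler_op i (f_lambda m a a0 l) * g1 i)" "\<forall>i. g1 i \<in> Sprime m a"
    using p unfolding JJ_def Jideal_def by blast
  have "\<forall>i. - g1 i \<in> Sprime m a"
    using g1(2) unfolding Sprime_def by (simp add: keys_uminus')
  moreover have "- p = (\<Sum>i\<in>UNIV. euler_op i (f_lambda m a a0 l) * (- g1 i))"
    by (simp add: g1(1) sum_negf)
  ultimately show ?thesis using J_intro[of "\<lambda>i. - g1 i"] by simp
qed

lemma J_diff: assumes p: "p \<in> JJ" and q: "q \<in> JJ" shows "p - q \<in> JJ"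
proof -
  have "p + - q \<in> JJ" by (rule J_add[OF p J_neg[OF q]])
  then show ?thesis by (simp only: diff_conv_add_uminus)
qed

lemma dual: assumes j: "j \<in> II"
  shows "\<exists>w. \<forall>k\<in>II. (\<Sum>i\<in>UNIV. w i * real_of_int (a k $ i)) = (if k = j then 1 else 0)"
proof -
  obtain g where lin: "linear g" and gv: "\<forall>x\<in>rv ` a ` II. g x = (if x = rv (a j) then (1::real) else 0)"
    using linear_independent_extend[OF indep', where f="\<lambda>x. if x = rv (a j) then (1::real) else 0"] by blast
  have "\<forall>k\<in>II. (\<Sum>i\<in>UNIV. g (axis i 1) * real_of_int (a k $ i)) = (if k = j then 1 else 0)"
  proof
    fix k assume k: "k \<in> II"
    have "rv (a k) = (\<Sum>i\<in>UNIV. (rv (a k) $ i) *\<^sub>R axis i 1)"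
      using basis_expansion[of "rv (a k)"] by (simp add: scalar_mult_eq_scaleR)
    then have "g (rv (a k)) = g (\<Sum>i\<in>UNIV. (rv (a k) $ i) *\<^sub>R axis i 1)" by simp
    also have "\<dots> = (\<Sum>i\<in>UNIV. g ((rv (a k) $ i) *\<^sub>R axis i 1))" by (rule linear_sum[OF lin])
    also have "\<dots> = (\<Sum>i\<in>UNIV. (rv (a k) $ i) *\<^sub>R g (axis i 1))" by (simp add: linear_scale[OF lin])
    also have "\<dots> = (\<Sum>i\<in>UNIV. g (axis i 1) * real_of_int (a k $ i))"
      by (simp add: rv_def mult.commute)
    finally have "(\<Sum>i\<in>UNIV. g (axis i 1) * real_of_int (a k $ i)) = g (rv (a k))" by simp
    also have "\<dots> = (if k = j then 1 else 0)"
    proof -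
      have "rv (a k) \<in> rv ` a ` II" using k by blast
      then have "g (rv (a k)) = (if rv (a k) = rv (a j) then 1 else 0)" using gv by blast
      moreover have "rv (a k) = rv (a j) \<longleftrightarrow> k = j" using inj_onD[OF inj_rva, of k j] k j by auto
      ultimately show ?thesis by simp
    qed
    finally show "(\<Sum>i\<in>UNIV. g (axis i 1) * real_of_int (a k $ i)) = (if k = j then 1 else 0)" .
  qed
  then show ?thesis by (rule exI[of _ "\<lambda>i. g (axis i 1)"])
qed

lemma J3: assumes j: "j \<in> II" and v: "v \<in> Mset m a"
  shows "Poly_Mapping.single (a j + v) d - Poly_Mapping.single (a0 + v) (lam * d) \<in> JJ"
proof -
  obtain w where w: "\<forall>k\<in>II. (\<Sum>i\<in>UNIV. w i * real_of_int (a k $ i)) = (if k = j then 1 else 0)"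
    using dual[OF j] by blast
  define e where "e i = ofr (w i) * d / of_nat (l j)" for i
  have lj: "(of_nat (l j) :: ratfun) \<noteq> 0" using lpos j by (intro ratfun_of_nat_ne0) (simp add: II_def)
  have S: "\<forall>i. Poly_Mapping.single v (e i) \<in> Sprime m a"
    using v by (simp add: Sprime_def)
  have kapsum: "(\<Sum>i\<in>UNIV. kap i k * e i) = (if k = j then d else 0)" if k: "k \<in> II" for k
  proof -
    have "(\<Sum>i\<in>UNIV. kap i k * e i) = (of_nat (l k) * d / of_nat (l j)) * (\<Sum>i\<in>UNIV. ofr (w i) * of_int (a k $ i))"
      by (simp add: kap_def e_def sum_distrib_left mult_ac)
    also have "(\<Sum>i\<in>UNIV. ofr (w i) * of_int (a k $ i)) = ofr (\<Sum>i\<in>UNIV. w i * real_of_int (a k $ i))"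
      by (simp add: ofr_sum ofr_mult ofr_of_int)
    also have "\<dots> = (if k = j then 1 else 0)" using w k by (simp add: ofr_one ofr_zero)
    finally show ?thesis using lj by auto
  qed
  have "(\<Sum>i\<in>UNIV. euler_op i (f_lambda m a a0 l) * Poly_Mapping.single v (e i))
     = (\<Sum>i\<in>UNIV. \<Sum>k\<in>II. Poly_Mapping.single (a k + v) (kap i k * e i) - Poly_Mapping.single (a0 + v) (lam * (kap i k * e i)))"
    by (simp add: euler_f sum_distrib_right left_diff_distrib mult_single mult.assoc)
  also have "\<dots> = (\<Sum>k\<in>II. \<Sum>i\<in>UNIV. Poly_Mapping.single (a k + v) (kap i k * e i) - Poly_Mapping.single (a0 + v) (lam * (kap i k * e i)))"
    by (rule sum.swap)
  also have "\<dots> = (\<Sum>k\<in>II. Poly_Mapping.single (a k + v) (\<Sum>i\<in>UNIV. kap i k * e i) - Poly_Mapping.single (a0 + v) (lam * (\<Sum>i\<in>UNIV. kap i k * e i)))"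
    by (simp add: sum_subtractf single_sum sum_distrib_left)
  also have "\<dots> = (\<Sum>k\<in>II. if k = j then Poly_Mapping.single (a k + v) d - Poly_Mapping.single (a0 + v) (lam * d) else 0)"
    by (rule sum.cong) (simp_all add: kapsum)
  also have "\<dots> = Poly_Mapping.single (a j + v) d - Poly_Mapping.single (a0 + v) (lam * d)"
    using j by simp
  finally show ?thesis using J_intro[of "\<lambda>i. Poly_Mapping.single v (e i)"] S by simp
qed


lemma group3: "(A::'x::ab_group_add) - C = (A - B) + (B - C)"
  by (simp add: algebra_simps)

lemma red_list: "w \<in> Mset m a \<Longrightarrow> set js \<subseteq> II \<Longrightarrow>
  Poly_Mapping.single (w + sum_list (map a js)) c - Poly_Mapping.single (w + of_nat (length js) *s a0) (lam ^ length js * c) \<in> JJ"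
proof (induction js arbitrary: w c)
  case Nil
  then show ?case by (simp add: J_zero)
next
  case (Cons j js)
  have j: "j \<in> II" and js: "set js \<subseteq> II" using Cons.prems by auto
  define v where "v = w + sum_list (map a js)"
  have vM: "v \<in> Mset m a" unfolding v_def using Cons.prems(1) M_sum_list[OF js] by (rule M_add)
  have h1: "Poly_Mapping.single (a j + v) c - Poly_Mapping.single (a0 + v) (lam * c) \<in> JJ"
    by (rule J3[OF j vM])
  have wa0: "w + a0 \<in> Mset m a" using M_add[OF Cons.prems(1) M_a0] .
  have h2: "Poly_Mapping.single ((w + a0) + sum_list (map a js)) (lam * c)
     - Poly_Mapping.single ((w + a0) + of_nat (length js) *s a0) (lam ^ length js * (lam * c)) \<in> JJ"
    by (rule Cons.IH[OF wa0 js])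
  have e1: "w + sum_list (map a (j # js)) = a j + v" by (simp add: v_def add_ac)
  have e2: "w + of_nat (length (j # js)) *s a0 = (w + a0) + of_nat (length js) *s a0"
    by (simp add: vector_sadd_rdistrib add_ac)
  have e3: "a0 + v = (w + a0) + sum_list (map a js)" by (simp add: v_def add_ac)
  have e4: "lam ^ length (j # js) * c = lam ^ length js * (lam * c)" by simp
  show ?case unfolding e1 e2 e4
    by (subst group3[where B="Poly_Mapping.single ((w + a0) + sum_list (map a js)) (lam * c)"],
        rule J_add[OF h1[unfolded e3] h2])
qed

lemma sum_list_replicate_a: "sum_list (replicate n v) = of_nat n *s (v::int^'n)"
  by (induction n) (simp_all add: vector_sadd_rdistrib add_ac)

lemma list_exists: "finite A \<Longrightarrow> A \<subseteq> II \<Longrightarrow>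
  \<exists>js. set js \<subseteq> II \<and> sum_list (map a js) = (\<Sum>j\<in>A. of_nat (k j) *s a j) \<and> length js = (\<Sum>j\<in>A. k j)"
proof (induction A rule: finite_induct)
  case empty
  show ?case by (rule exI[of _ "[]"]) simp
next
  case (insert x F)
  then obtain js where js: "set js \<subseteq> II" "sum_list (map a js) = (\<Sum>j\<in>F. of_nat (k j) *s a j)" "length js = (\<Sum>j\<in>F. k j)"
    by auto
  show ?case
    by (rule exI[of _ "replicate (k x) x @ js"]) (use insert js in \<open>simp add: sum_list_replicate_a set_replicate_conv_if\<close>)
qed

lemma red: assumes w: "w \<in> Mset m a" and u: "u \<in> Mset m a"
  shows "Poly_Mapping.single (w + u) c - Poly_Mapping.single (w + bs u + of_nat (sn u) *s a0) (lam ^ sn u * c) \<in> JJ"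
proof -
  obtain js where js: "set js \<subseteq> II" "sum_list (map a js) = (\<Sum>j\<in>II. of_nat (nat (fl u j)) *s a j)"
     "length js = (\<Sum>j\<in>II. nat (fl u j))"
    using list_exists[of II "\<lambda>j. nat (fl u j)"] by auto
  have js2: "sum_list (map a js) = (\<Sum>j\<in>II. fl u j *s a j)"
    unfolding js(2) by (rule sum.cong) (simp_all add: M_fl[OF u])
  have len: "length js = sn u" using js(3) by (simp add: sn_def)
  have decomp2: "bs u + (\<Sum>j\<in>II. fl u j *s a j) = u" by (simp add: bs_def)
  have e: "w + u = (w + bs u) + sum_list (map a js)" by (simp add: js2 add.assoc decomp2)
  have wb: "w + bs u \<in> Mset m a" using M_add[OF w B_M[OF bs_B[OF M_VZ[OF u]]]] .
  show ?thesis unfolding e using red_list[OF wb js(1), of c] by (simp add: len)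
qed

lemma step_red: assumes b: "snd st \<in> Bset m a"
  shows "Poly_Mapping.single (Xv st) c - Poly_Mapping.single (Xv (step st)) (lam ^ wt st * c) \<in> JJ"
proof (cases "fst st = 0")
  case True then show ?thesis by (simp add: step_def wt_def J_zero)
next
  case False
  then obtain s where s: "fst st = Suc s" by (cases "fst st") auto
  define u where "u = snd st + a0"
  have uM: "u \<in> Mset m a" unfolding u_def using M_add[OF B_M[OF b] M_a0] .
  have wM: "of_nat s *s a0 \<in> Mset m a" by (rule M_smult[OF M_a0])
  have e1: "Xv st = of_nat s *s a0 + u"
    by (simp add: Xv_def s u_def vector_sadd_rdistrib add_ac)
  have e2: "Xv (step st) = of_nat s *s a0 + bs u + of_nat (sn u) *s a0"
    by (simp add: Xv_def step_def s u_def vector_sadd_rdistrib add_ac)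
  have e3: "wt st = sn u" by (simp add: wt_def s u_def)
  show ?thesis unfolding e1 e2 e3 by (rule red[OF wM uM])
qed

lemma iter_red: assumes b: "snd st \<in> Bset m a"
  shows "Poly_Mapping.single (Xv st) c - Poly_Mapping.single (Xv ((step ^^ n) st)) (lam ^ Wt st n * c) \<in> JJ"
proof (induction n)
  case 0 then show ?case by (simp add: Wt_def J_zero)
next
  case (Suc n)
  have h: "Poly_Mapping.single (Xv ((step ^^ n) st)) (lam ^ Wt st n * c)
     - Poly_Mapping.single (Xv (step ((step ^^ n) st))) (lam ^ wt ((step ^^ n) st) * (lam ^ Wt st n * c)) \<in> JJ"
    by (rule step_red[OF iter_B[OF b]])
  have e: "lam ^ wt ((step ^^ n) st) * (lam ^ Wt st n * c) = lam ^ Wt st (Suc n) * c"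
    by (simp add: Wt_Suc power_add mult_ac)
  have e2: "(step ^^ Suc n) st = step ((step ^^ n) st)" by simp
  show ?case unfolding e2
    by (subst group3[where B="Poly_Mapping.single (Xv ((step ^^ n) st)) (lam ^ Wt st n * c)"],
        rule J_add[OF Suc.IH h[unfolded e]])
qed


lemma finite_B: "finite (Bset m a)"
proof -
  define R where "R i = (\<Sum>j\<in>II. \<bar>a j $ i\<bar>)" for i
  have sub: "Bset m a \<subseteq> (\<lambda>f. vec_lambda f) ` (PiE UNIV (\<lambda>i. {- R i..R i}))"
  proof
    fix b assume b: "b \<in> Bset m a"
    have bz: "b \<in> VZ m a" using b B_iff by blast
    have bound: "\<bar>b $ i\<bar> \<le> R i" for i
    proof -
      have "real_of_int (b $ i) = rv b $ i" by (simp add: rv_def)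
      also have "\<dots> = (\<Sum>j\<in>II. coef b j * real_of_int (a j $ i))"
        using coef_rep[OF bz] by (simp add: rv_def sum_component)
      finally have eq: "real_of_int (b $ i) = (\<Sum>j\<in>II. coef b j * real_of_int (a j $ i))" .
      have "\<bar>\<Sum>j\<in>II. coef b j * real_of_int (a j $ i)\<bar> \<le> (\<Sum>j\<in>II. \<bar>coef b j * real_of_int (a j $ i)\<bar>)"
        by (rule sum_abs)
      also have "\<dots> \<le> (\<Sum>j\<in>II. real_of_int \<bar>a j $ i\<bar>)"
      proof (rule sum_mono)
        fix j assume j: "j \<in> II"
        have "0 \<le> coef b j" "coef b j < 1" using b j B_iff by auto
        then show "\<bar>coef b j * real_of_int (a j $ i)\<bar> \<le> real_of_int \<bar>a j $ i\<bar>"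
          by (simp add: abs_mult) (rule mult_left_le_one_le; simp)
      qed
      finally have "\<bar>real_of_int (b $ i)\<bar> \<le> real_of_int (R i)" unfolding eq R_def by simp
      then show ?thesis by linarith
    qed
    have "- R i \<le> b $ i \<and> b $ i \<le> R i" for i
      using abs_le_D1[OF bound[of i]] abs_le_D2[OF bound[of i]] by linarith
    then have "(\<lambda>i. b $ i) \<in> PiE UNIV (\<lambda>i. {- R i..R i})"
      by auto
    moreover have "b = vec_lambda (\<lambda>i. b $ i)" by simp
    ultimately show "b \<in> (\<lambda>f. vec_lambda f) ` (PiE UNIV (\<lambda>i. {- R i..R i}))" by blast
  qed
  show ?thesis by (rule finite_subset[OF sub]) (intro finite_imageI finite_PiE; simp)
qed

lemma desc: assumes "\<forall>t<d. wt ((step ^^ t) x) = 0" and "\<forall>t. fst ((step ^^ t) x) \<noteq> 0"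
  shows "fst ((step ^^ d) x) + d = fst x"
  using assms
proof (induction d)
  case 0 then show ?case by simp
next
  case (Suc d)
  let ?y = "(step ^^ d) x"
  have ne: "fst ?y \<noteq> 0" using Suc.prems(2) by blast
  have w0: "wt ?y = 0" using Suc.prems(1) by simp
  have "fst (step ?y) = fst ?y - 1" using ne w0 by (simp add: step_def wt_def)
  moreover have "fst ?y + d = fst x" using Suc by simp
  ultimately show ?case using ne by simp
qed

lemma cycle: assumes b: "snd st \<in> Bset m a" and nt: "\<forall>n. fst ((step ^^ n) st) \<noteq> 0"
  shows "Poly_Mapping.single (Xv st) c \<in> JJ"
proof -
  define R where "R = real (fst st) + hh (snd st)"
  define T where "T = {..nat \<lceil>R\<rceil>} \<times> Bset m a"
  have inT: "(step ^^ n) st \<in> T" for n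
  proof -
    have "real (fst ((step ^^ n) st)) \<le> R" unfolding R_def by (rule iter_bound[OF b])
    then have "fst ((step ^^ n) st) \<le> nat \<lceil>R\<rceil>" by linarith
    then show ?thesis unfolding T_def using iter_B[OF b, of n] by (simp add: mem_Times_iff)
  qed
  have finT: "finite T" unfolding T_def using finite_B by simp
  have "\<not> inj (\<lambda>n. (step ^^ n) st)"
  proof
    assume inj: "inj (\<lambda>n. (step ^^ n) st)"
    have "range (\<lambda>n. (step ^^ n) st) \<subseteq> T" using inT by blast
    then have "finite (range (\<lambda>n. (step ^^ n) st))" using finT finite_subset by blast
    then have "finite (UNIV :: nat set)" using finite_imageD[OF _ inj] by blast
    then show False by simp
  qed
  then obtain x y where xy: "x \<noteq> y" "(step ^^ x) st = (step ^^ y) st"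
    unfolding inj_def by blast
  define i where "i = min x y"
  define j where "j = max x y"
  have ij: "i < j" "(step ^^ i) st = (step ^^ j) st"
    using xy unfolding i_def j_def by (cases "x < y"; simp add: min_def max_def)+
  define st' where "st' = (step ^^ i) st"
  define d where "d = j - i"
  have d0: "0 < d" using ij unfolding d_def by simp
  have loop: "(step ^^ d) st' = st'"
  proof -
    have "(step ^^ d) st' = (step ^^ (d + i)) st" unfolding st'_def by (simp add: funpow_add)
    also have "d + i = j" using ij unfolding d_def by simp
    finally show ?thesis using ij unfolding st'_def by simp
  qed
  have b': "snd st' \<in> Bset m a" unfolding st'_def by (rule iter_B[OF b])
  have nt': "\<forall>t. fst ((step ^^ t) st') \<noteq> 0"
  proof
    fix t
    have "(step ^^ t) st' = (step ^^ (t + i)) st" unfolding st'_def by (simp add: funpow_add)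
    then show "fst ((step ^^ t) st') \<noteq> 0" using nt by simp
  qed
  define W where "W = Wt st' d"
  have Wpos: "0 < W"
  proof (rule ccontr)
    assume "\<not> 0 < W"
    then have "W = 0" by simp
    then have "\<forall>t<d. wt ((step ^^ t) st') = 0" unfolding W_def Wt_def by simp
    then have "fst ((step ^^ d) st') + d = fst st'" using desc nt' by blast
    then show False using loop d0 by simp
  qed
  have lw: "1 - lam ^ W \<noteq> 0" using lam_pow_ne1[OF Wpos] by simp
  have any: "Poly_Mapping.single (Xv st') e \<in> JJ" for e
  proof -
    have "Poly_Mapping.single (Xv st') (e / (1 - lam ^ W)) - Poly_Mapping.single (Xv st') (lam ^ W * (e / (1 - lam ^ W))) \<in> JJ"
      using iter_red[OF b', of "e / (1 - lam ^ W)" d] loop unfolding W_def by simp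
    also have "Poly_Mapping.single (Xv st') (e / (1 - lam ^ W)) - Poly_Mapping.single (Xv st') (lam ^ W * (e / (1 - lam ^ W)))
       = Poly_Mapping.single (Xv st') e"
    proof -
      have "e / (1 - lam ^ W) - lam ^ W * (e / (1 - lam ^ W)) = (1 - lam ^ W) * (e / (1 - lam ^ W))"
        by (simp only: left_diff_distrib mult_1_left)
      also have "\<dots> = e" using lw by simp
      finally have "e / (1 - lam ^ W) - lam ^ W * (e / (1 - lam ^ W)) = e" .
      then show ?thesis by (simp flip: single_diff)
    qed
    finally show ?thesis .
  qed
  have h: "Poly_Mapping.single (Xv st) c - Poly_Mapping.single (Xv st') (lam ^ Wt st i * c) \<in> JJ"
    unfolding st'_def by (rule iter_red[OF b])
  have "Poly_Mapping.single (Xv st) c = (Poly_Mapping.single (Xv st) c - Poly_Mapping.single (Xv st') (lam ^ Wt st i * c))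
     + Poly_Mapping.single (Xv st') (lam ^ Wt st i * c)" by simp
  then show ?thesis using J_add[OF h any[of "lam ^ Wt st i * c"]] by simp
qed

lemma mono_span: assumes u: "u \<in> Mset m a"
  shows "\<exists>F cc. finite F \<and> F \<subseteq> Bset m a \<and>
     Poly_Mapping.single u c - (\<Sum>b\<in>F. Poly_Mapping.single b (cc b)) \<in> JJ"
proof -
  define st where "st = (sn u, bs u)"
  have b: "snd st \<in> Bset m a" unfolding st_def using bs_B[OF M_VZ[OF u]] by simp
  have r0: "Poly_Mapping.single u c - Poly_Mapping.single (Xv st) (lam ^ sn u * c) \<in> JJ"
    using red[OF M_zero u, of c] by (simp add: Xv_def st_def)
  show ?thesis
  proof (cases "\<exists>n. fst ((step ^^ n) st) = 0")
    case True
    then obtain n where n: "fst ((step ^^ n) st) = 0" by blast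
    define b' where "b' = snd ((step ^^ n) st)"
    have xb: "Xv ((step ^^ n) st) = b'" unfolding b'_def Xv_def using n by simp
    have b'B: "b' \<in> Bset m a" unfolding b'_def by (rule iter_B[OF b])
    have h: "Poly_Mapping.single (Xv st) (lam ^ sn u * c) - Poly_Mapping.single b' (lam ^ Wt st n * (lam ^ sn u * c)) \<in> JJ"
      using iter_red[OF b, of "lam ^ sn u * c" n] xb by simp
    have "Poly_Mapping.single u c - (\<Sum>b\<in>{b'}. Poly_Mapping.single b ((\<lambda>_. lam ^ Wt st n * (lam ^ sn u * c)) b)) \<in> JJ"
      using J_add[OF r0 h] by simp
    then show ?thesis using b'B
      by (intro exI[of _ "{b'}"] exI[of _ "\<lambda>_. lam ^ Wt st n * (lam ^ sn u * c)"]) simp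
  next
    case False
    then have "\<forall>n. fst ((step ^^ n) st) \<noteq> 0" by simp
    then have cy: "Poly_Mapping.single (Xv st) (lam ^ sn u * c) \<in> JJ" by (rule cycle[OF b])
    have "Poly_Mapping.single u c - (\<Sum>b\<in>{}. Poly_Mapping.single b ((\<lambda>_. 0) b)) \<in> JJ"
      using J_add[OF r0 cy] by simp
    then show ?thesis by (intro exI[of _ "{}"] exI[of _ "\<lambda>_. 0"]) simp
  qed
qed


lemma span_sum: "finite K \<Longrightarrow> K \<subseteq> Mset m a \<Longrightarrow> \<exists>F cc. finite F \<and> F \<subseteq> Bset m a \<and>
   (\<Sum>v\<in>K. Poly_Mapping.single v (h v)) - (\<Sum>b\<in>F. Poly_Mapping.single b (cc b)) \<in> JJ"
proof (induction K rule: finite_induct)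
  case empty
  show ?case by (intro exI[of _ "{}"] exI[of _ "\<lambda>_. 0"]) (simp add: J_zero)
next
  case (insert x K)
  obtain F1 c1 where F1: "finite F1" "F1 \<subseteq> Bset m a"
    "Poly_Mapping.single x (h x) - (\<Sum>b\<in>F1. Poly_Mapping.single b (c1 b)) \<in> JJ"
    using mono_span[of x "h x"] insert.prems by blast
  obtain F2 c2 where F2: "finite F2" "F2 \<subseteq> Bset m a"
    "(\<Sum>v\<in>K. Poly_Mapping.single v (h v)) - (\<Sum>b\<in>F2. Poly_Mapping.single b (c2 b)) \<in> JJ"
    using insert.IH insert.prems by blast
  define cc where "cc b = (if b \<in> F1 then c1 b else 0) + (if b \<in> F2 then c2 b else 0)" for b
  have s1: "(\<Sum>b\<in>F1 \<union> F2. Poly_Mapping.single b (if b \<in> F1 then c1 b else 0)) = (\<Sum>b\<in>F1. Poly_Mapping.single b (c1 b))"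
    by (rule sum.mono_neutral_cong_right) (use F1 F2 in auto)
  have s2: "(\<Sum>b\<in>F1 \<union> F2. Poly_Mapping.single b (if b \<in> F2 then c2 b else 0)) = (\<Sum>b\<in>F2. Poly_Mapping.single b (c2 b))"
    by (rule sum.mono_neutral_cong_right) (use F1 F2 in auto)
  have sumeq: "(\<Sum>b\<in>F1 \<union> F2. Poly_Mapping.single b (cc b)) = (\<Sum>b\<in>F1. Poly_Mapping.single b (c1 b)) + (\<Sum>b\<in>F2. Poly_Mapping.single b (c2 b))"
    unfolding cc_def single_add sum.distrib s1 s2 ..
  have "(\<Sum>v\<in>insert x K. Poly_Mapping.single v (h v)) - (\<Sum>b\<in>F1 \<union> F2. Poly_Mapping.single b (cc b))
     = (Poly_Mapping.single x (h x) - (\<Sum>b\<in>F1. Poly_Mapping.single b (c1 b)))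
       + ((\<Sum>v\<in>K. Poly_Mapping.single v (h v)) - (\<Sum>b\<in>F2. Poly_Mapping.single b (c2 b)))"
    unfolding sumeq using insert.hyps by (simp add: algebra_simps)
  then have "(\<Sum>v\<in>insert x K. Poly_Mapping.single v (h v)) - (\<Sum>b\<in>F1 \<union> F2. Poly_Mapping.single b (cc b)) \<in> JJ"
    using J_add[OF F1(3) F2(3)] by simp
  then show ?case using F1 F2 by (intro exI[of _ "F1 \<union> F2"] exI[of _ cc]) simp
qed

lemma span_all: assumes p: "p \<in> Sprime m a"
  shows "\<exists>F cc. finite F \<and> F \<subseteq> Bset m a \<and> p - (\<Sum>b\<in>F. Poly_Mapping.single b (cc b)) \<in> JJ"
proof -
  have K: "Poly_Mapping.keys p \<subseteq> Mset m a" using p by (simp add: Sprime_def)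
  obtain F cc where "finite F" "F \<subseteq> Bset m a"
    "(\<Sum>v\<in>Poly_Mapping.keys p. Poly_Mapping.single v (Poly_Mapping.lookup p v)) - (\<Sum>b\<in>F. Poly_Mapping.single b (cc b)) \<in> JJ"
    using span_sum[OF finite_keys K, of "Poly_Mapping.lookup p"] by blast
  then show ?thesis by (intro exI[of _ F] exI[of _ cc]) (simp flip: poly_expand)
qed

definition halts :: "nat \<times> (int ^ 'n) \<Rightarrow> bool" where "halts st \<longleftrightarrow> (\<exists>n. fst ((step ^^ n) st) = 0)"
definition nt :: "nat \<times> (int ^ 'n) \<Rightarrow> nat" where "nt st = (LEAST n. fst ((step ^^ n) st) = 0)"
definition Phi :: "int ^ 'n \<Rightarrow> nat \<times> (int ^ 'n) \<Rightarrow> ratfun" where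
  "Phi c st = (if halts st then lam ^ Wt st (nt st) * (if snd ((step ^^ nt st) st) = c then 1 else 0) else 0)"

lemma funpow_Suc_app: "(step ^^ Suc n) st = (step ^^ n) (step st)"
  by (simp del: funpow.simps add: funpow_Suc_right)

lemma Phi_rec: assumes ne: "fst st \<noteq> 0" shows "Phi c st = lam ^ wt st * Phi c (step st)"
proof -
  have hs: "halts st \<longleftrightarrow> halts (step st)"
  proof
    assume "halts st"
    then obtain n where n: "fst ((step ^^ n) st) = 0" unfolding halts_def by blast
    then obtain n' where n': "n = Suc n'" using ne by (cases n) auto
    have "fst ((step ^^ n') (step st)) = 0" using n unfolding n' funpow_Suc_app .
    then show "halts (step st)" unfolding halts_def by blast
  next
    assume "halts (step st)"
    then obtain n where n: "fst ((step ^^ n) (step st)) = 0" unfolding halts_def by blast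
    then have "fst ((step ^^ Suc n) st) = 0" by (simp only: funpow_Suc_app)
    then show "halts st" unfolding halts_def by blast
  qed
  show ?thesis
  proof (cases "halts st")
    case False then show ?thesis using hs by (simp add: Phi_def)
  next
    case True
    then obtain n where n: "fst ((step ^^ n) st) = 0" unfolding halts_def by blast
    have "nt st = Suc (LEAST m. fst ((step ^^ Suc m) st) = 0)"
      unfolding nt_def by (rule Least_Suc[where P="\<lambda>n. fst ((step ^^ n) st) = 0", OF n]) (use ne in simp)
    also have "(LEAST m. fst ((step ^^ Suc m) st) = 0) = nt (step st)"
      unfolding nt_def by (simp only: funpow_Suc_app)
    finally have ntS: "nt st = Suc (nt (step st))" .
    show ?thesis using True hs unfolding Phi_def ntS Wt_shift funpow_Suc_app
      by (simp add: power_add mult_ac)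
  qed
qed

definition phi :: "int ^ 'n \<Rightarrow> int ^ 'n \<Rightarrow> ratfun" where
  "phi c u = lam ^ sn u * Phi c (sn u, bs u)"

lemma phi_rel: assumes v: "v \<in> Mset m a" and j: "j \<in> II"
  shows "phi c (v + a j) = lam * phi c (v + a0)"
proof -
  have vz: "v \<in> VZ m a" using v by (rule M_VZ)
  have "Phi c (Suc (sn v), bs v) = lam ^ sn (bs v + a0) * Phi c (sn v + sn (bs v + a0), bs (bs v + a0))"
    by (subst Phi_rec) (simp_all add: wt_def step_def)
  then show ?thesis
    unfolding phi_def sn_add_a[OF v j] bs_add_a[OF vz j] sn_add_a0[OF v] bs_add_a0[OF vz]
    by (simp add: power_add mult_ac)
qed

lemma phi_B: "b \<in> Bset m a \<Longrightarrow> phi c b = (if b = c then 1 else 0)"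
proof -
  assume b: "b \<in> Bset m a"
  have h: "halts (0, b)" unfolding halts_def by (rule exI[of _ 0]) simp
  have n: "nt (0, b) = 0" unfolding nt_def by (rule Least_eq_0) simp
  show ?thesis unfolding phi_def B_sn[OF b] B_bs[OF b] Phi_def using h n by (simp add: Wt_def)
qed

definition Lf :: "int ^ 'n \<Rightarrow> 'n laurent \<Rightarrow> ratfun" where
  "Lf c p = (\<Sum>u\<in>Poly_Mapping.keys p. Poly_Mapping.lookup p u * phi c u)"

lemma Lf_sup: "finite K \<Longrightarrow> Poly_Mapping.keys p \<subseteq> K \<Longrightarrow> Lf c p = (\<Sum>u\<in>K. Poly_Mapping.lookup p u * phi c u)"
  unfolding Lf_def by (rule sum.mono_neutral_left) (auto simp: in_keys_iff)

lemma Lf_add: "Lf c (p + q) = Lf c p + Lf c q"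
proof -
  let ?K = "Poly_Mapping.keys p \<union> Poly_Mapping.keys q"
  have "Lf c (p + q) = (\<Sum>u\<in>?K. Poly_Mapping.lookup (p + q) u * phi c u)"
    by (rule Lf_sup) (simp_all add: keys_add)
  also have "\<dots> = (\<Sum>u\<in>?K. Poly_Mapping.lookup p u * phi c u) + (\<Sum>u\<in>?K. Poly_Mapping.lookup q u * phi c u)"
    by (simp add: lookup_add distrib_right sum.distrib)
  also have "(\<Sum>u\<in>?K. Poly_Mapping.lookup p u * phi c u) = Lf c p" by (rule Lf_sup[symmetric]) auto
  also have "(\<Sum>u\<in>?K. Poly_Mapping.lookup q u * phi c u) = Lf c q" by (rule Lf_sup[symmetric]) auto
  finally show ?thesis .
qed

lemma Lf_neg: "Lf c (- p) = - Lf c p"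
  unfolding Lf_def keys_uminus' by (simp add: sum_negf)

lemma Lf_diff: "Lf c (p - q) = Lf c p - Lf c q"
  by (simp only: diff_conv_add_uminus Lf_add Lf_neg)

lemma Lf_zero: "Lf c 0 = 0"
  by (simp add: Lf_def)

lemma Lf_sum: "Lf c (sum f S) = (\<Sum>x\<in>S. Lf c (f x))"
  by (induction S rule: infinite_finite_induct) (simp_all add: Lf_zero Lf_add)

lemma Lf_single: "Lf c (Poly_Mapping.single u d) = d * phi c u"
  by (simp add: Lf_def)

lemma Lf_rel: assumes j: "j \<in> II" and g: "g \<in> Sprime m a"
  shows "Lf c ((Poly_Mapping.single (a j) k - Poly_Mapping.single a0 (lam * k)) * g) = 0"
proof -
  have gk: "Poly_Mapping.keys g \<subseteq> Mset m a" using g by (simp add: Sprime_def)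
  have "(Poly_Mapping.single (a j) k - Poly_Mapping.single a0 (lam * k)) * g
     = (\<Sum>v\<in>Poly_Mapping.keys g. (Poly_Mapping.single (a j) k - Poly_Mapping.single a0 (lam * k)) * Poly_Mapping.single v (Poly_Mapping.lookup g v))"
    by (subst poly_expand[of g]) (simp add: sum_distrib_left)
  also have "\<dots> = (\<Sum>v\<in>Poly_Mapping.keys g. Poly_Mapping.single (a j + v) (k * Poly_Mapping.lookup g v)
      - Poly_Mapping.single (a0 + v) (lam * k * Poly_Mapping.lookup g v))"
    by (simp add: left_diff_distrib mult_single)
  finally have e: "(Poly_Mapping.single (a j) k - Poly_Mapping.single a0 (lam * k)) * g = \<dots>" .
  have "Lf c (Poly_Mapping.single (a j + v) (k * Poly_Mapping.lookup g v)
      - Poly_Mapping.single (a0 + v) (lam * k * Poly_Mapping.lookup g v)) = 0" if v: "v \<in> Poly_Mapping.keys g" for v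
  proof -
    have vM: "v \<in> Mset m a" using v gk by blast
    have "phi c (a j + v) = lam * phi c (a0 + v)" using phi_rel[OF vM j] by (simp add: add.commute)
    then show ?thesis by (simp add: Lf_diff Lf_single mult_ac)
  qed
  then show ?thesis unfolding e Lf_sum by simp
qed

lemma Lf_J: assumes p: "p \<in> JJ" shows "Lf c p = 0"
proof -
  obtain g where g: "p = (\<Sum>i\<in>UNIV. euler_op i (f_lambda m a a0 l) * g i)" "\<forall>i. g i \<in> Sprime m a"
    using p unfolding JJ_def Jideal_def by blast
  have "Lf c (euler_op i (f_lambda m a a0 l) * g i) = 0" for i
    unfolding euler_f sum_distrib_right Lf_sum using Lf_rel g(2) by simp
  then show ?thesis unfolding g(1) Lf_sum by simp
qed

lemma indep_B: assumes F: "finite F" "F \<subseteq> Bset m a"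
  and inJ: "(\<Sum>b\<in>F. Poly_Mapping.single b (cc b)) \<in> JJ" and b0: "b0 \<in> F"
  shows "cc b0 = 0"
proof -
  have "0 = Lf b0 (\<Sum>b\<in>F. Poly_Mapping.single b (cc b))" using Lf_J[OF inJ] by simp
  also have "\<dots> = (\<Sum>b\<in>F. cc b * (if b = b0 then 1 else 0))"
    unfolding Lf_sum Lf_single by (rule sum.cong) (use F phi_B in auto)
  also have "\<dots> = cc b0" using F b0 by (simp add: if_distrib cong: if_cong)
  finally show ?thesis by simp
qed

end

theorem proposition5p5:
  fixes m :: nat and a :: "nat \<Rightarrow> int ^ 'n::finite" and a0 :: "int ^ 'n" and l :: "nat \<Rightarrow> nat"
  assumes inj: "inj_on a {1..m}"
    and indep: "independent (rv ` a ` {1..m})"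
    and lpos: "\<forall>j\<in>{0..m}. 0 < l j"
    and lgcd: "Gcd (l ` {0..m}) = 1"
    and rel: "of_nat (l 0) *s a0 = (\<Sum>j\<in>{1..m}. of_nat (l j) *s a j)"
    and l0: "l 0 = (\<Sum>j\<in>{1..m}. l j)"
  shows
    "(\<forall>p\<in>Sprime m a. \<exists>F c. finite F \<and> F \<subseteq> Bset m a \<and>
        p - (\<Sum>b\<in>F. Poly_Mapping.single b (c b)) \<in> Jideal (f_lambda m a a0 l) (Sprime m a))
     \<and> (\<forall>F c. finite F \<and> F \<subseteq> Bset m a \<and>
        (\<Sum>b\<in>F. Poly_Mapping.single b (c b)) \<in> Jideal (f_lambda m a a0 l) (Sprime m a)
        \<longrightarrow> (\<forall>b\<in>F. c b = (0::ratfun)))"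
proof -
  interpret P: P55 m a a0 l
    using inj indep lpos rel l0 by (unfold_locales)
  show ?thesis
  proof (intro conjI ballI allI impI)
    fix p assume "p \<in> Sprime m a"
    then show "\<exists>F c. finite F \<and> F \<subseteq> Bset m a \<and>
        p - (\<Sum>b\<in>F. Poly_Mapping.single b (c b)) \<in> Jideal (f_lambda m a a0 l) (Sprime m a)"
      using P.span_all unfolding P.JJ_def by blast
  next
    fix F c b
    assume h: "finite F \<and> F \<subseteq> Bset m a \<and>
        (\<Sum>b\<in>F. Poly_Mapping.single b (c b)) \<in> Jideal (f_lambda m a a0 l) (Sprime m a)"
      and b: "b \<in> F"
    then show "c b = 0" using P.indep_B[of F c b] unfolding P.JJ_def by blast
  qed
qed

end
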